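(* In the multi-period newsvendor setting described in the context, suppose the demands $X_1,\dots,X_T$ are independent with $X_t\sim\mathcal N(\mu_t,\sigma_t^2)$, $\sigma_t>0$, and write $\boldsymbol\omega=(\boldsymbol\mu,\boldsymbol\sigma)$. Then, for every fixed $\boldsymbol q$, the expected cost $C_{\boldsymbol\omega}(\boldsymbol q)$ is (1) convex in $\mu_t$ for every $t\in\{1,\dots,T\}$, and (2) increasing in $\sigma_t$ for every $t\in\{1,\dots,T\}$.
   Context: There are $T$ periods; $q_t$ is the order delivered at the start of period $t$, $X_t$ the demand in period $t$. Inventory: $I_t=\sum_{k=1}^t(q_k-X_k)$, $I_t^+=\max\{I_t,0\}$, $I_t^-=\max\{-I_t,0\}$. Nonnegative constants: holding cost $h$, backorder cost $b$, price $p$; unit ordering costs $w_t$. The expected cost under parameters $\boldsymbol\omega$ is $$C_{\boldsymbol\omega}(\boldsymbol q)=p\,\mathbb E_{\boldsymbol\omega}[I_T^-]+\sum_{t=1}^T\Big(h\,\mathbb E_{\boldsymbol\omega}[I_t^+]+b\,\mathbb E_{\boldsymbol\omega}[I_t^-]+w_tq_t-p\,\mathbb E_{\boldsymbol\omega}[X_t]\Big).$$ *)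

theory Defs
  imports "HOL-Probability.Probability"
begin

text \<open>Joint law of the independent demands X_1..X_T with X_t ~ N(mu t, sig t^2):
  the product of the normal laws on the index set {1..T}; the demand X_t is the coordinate t.\<close>
definition demand_space :: "nat \<Rightarrow> (nat \<Rightarrow> real) \<Rightarrow> (nat \<Rightarrow> real) \<Rightarrow> (nat \<Rightarrow> real) measure" where
  "demand_space T mu sig = PiM {1..T} (\<lambda>t. density lborel (normal_density (mu t) (sig t)))"

definition inv_level :: "(nat \<Rightarrow> real) \<Rightarrow> nat \<Rightarrow> (nat \<Rightarrow> real) \<Rightarrow> real" where
  "inv_level q t X = (\<Sum>k=1..t. q k - X k)"

definition pos_part :: "real \<Rightarrow> real" where "pos_part x = max x 0"
definition neg_part :: "real \<Rightarrow> real" where "neg_part x = max (- x) 0"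

definition exp_cost :: "nat \<Rightarrow> real \<Rightarrow> real \<Rightarrow> real \<Rightarrow> (nat \<Rightarrow> real) \<Rightarrow>
    (nat \<Rightarrow> real) \<Rightarrow> (nat \<Rightarrow> real) \<Rightarrow> (nat \<Rightarrow> real) \<Rightarrow> real" where
  "exp_cost T h b p w mu sig q =
    (let M = demand_space T mu sig in
      p * (\<integral>X. neg_part (inv_level q T X) \<partial>M)
      + (\<Sum>t=1..T. h * (\<integral>X. pos_part (inv_level q t X) \<partial>M)
                   + b * (\<integral>X. neg_part (inv_level q t X) \<partial>M)
                   + w t * q t
                   - p * (\<integral>X. X t \<partial>M)))"

end

theory Submission
  imports Defs
begin

definition Phi :: "(real \<Rightarrow> real) \<Rightarrow> real \<Rightarrow> real \<Rightarrow> real" where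
  "Phi g a s = (\<integral>z. std_normal_density z * g (a + s * z) \<partial>lborel)"

lemma Phi_integrable:
  assumes gm: "g \<in> borel_measurable borel" and gb: "\<And>x. \<bar>g x\<bar> \<le> \<bar>x\<bar>"
  shows "integrable lborel (\<lambda>z. std_normal_density z * g (a + s * z))"
proof (rule Bochner_Integration.integrable_bound)
  show "integrable lborel (\<lambda>z. \<bar>a\<bar> * (std_normal_density z * \<bar>z\<bar>^0) + \<bar>s\<bar> * (std_normal_density z * \<bar>z\<bar>^1))"
  proof (rule Bochner_Integration.integrable_add)
    show "integrable lborel (\<lambda>z. \<bar>a\<bar> * (std_normal_density z * \<bar>z\<bar>^0))"
      by (rule Bochner_Integration.integrable_mult_right) (rule integrable_std_normal_moment_abs)
    show "integrable lborel (\<lambda>z. \<bar>s\<bar> * (std_normal_density z * \<bar>z\<bar>^1))"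
      by (rule Bochner_Integration.integrable_mult_right) (rule integrable_std_normal_moment_abs)
  qed
  show "(\<lambda>z. std_normal_density z * g (a + s * z)) \<in> borel_measurable lborel"
    using gm by measurable
  show "AE z in lborel. norm (std_normal_density z * g (a + s * z)) \<le>
      norm (\<bar>a\<bar> * (std_normal_density z * \<bar>z\<bar>^0) + \<bar>s\<bar> * (std_normal_density z * \<bar>z\<bar>^1))"
  proof (intro AE_I2)
    fix z
    have d: "0 \<le> std_normal_density z" by simp
    have "\<bar>g (a + s*z)\<bar> \<le> \<bar>a + s*z\<bar>" by (rule gb)
    also have "\<dots> \<le> \<bar>a\<bar> + \<bar>s*z\<bar>" by (rule abs_triangle_ineq)
    also have "\<bar>s*z\<bar> = \<bar>s\<bar> * \<bar>z\<bar>" by (rule abs_mult)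
    finally have "\<bar>g (a + s*z)\<bar> \<le> \<bar>a\<bar> + \<bar>s\<bar> * \<bar>z\<bar>" .
    then have "std_normal_density z * \<bar>g (a + s*z)\<bar> \<le> std_normal_density z * (\<bar>a\<bar> + \<bar>s\<bar> * \<bar>z\<bar>)"
      using d by (rule mult_left_mono)
    moreover have "norm (std_normal_density z * g (a + s * z)) = std_normal_density z * \<bar>g (a + s*z)\<bar>"
      using d by (simp add: abs_mult)
    moreover have "norm (\<bar>a\<bar> * (std_normal_density z * \<bar>z\<bar>^0) + \<bar>s\<bar> * (std_normal_density z * \<bar>z\<bar>^1))
       = std_normal_density z * (\<bar>a\<bar> + \<bar>s\<bar> * \<bar>z\<bar>)"
      using d by (simp add: distrib_left mult.commute mult.left_commute)
    ultimately show "norm (std_normal_density z * g (a + s * z)) \<le>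
      norm (\<bar>a\<bar> * (std_normal_density z * \<bar>z\<bar>^0) + \<bar>s\<bar> * (std_normal_density z * \<bar>z\<bar>^1))"
      by simp
  qed
qed

lemma Phi_convex:
  assumes gm: "g \<in> borel_measurable borel" and gb: "\<And>x. \<bar>g x\<bar> \<le> \<bar>x\<bar>"
    and gc: "convex_on UNIV g"
  shows "convex_on UNIV (\<lambda>u. Phi g (a0 + u * a1) (b0 + u * b1))"
proof (rule convex_onI)
  fix t x y :: real assume t: "0 < t" "t < 1"
  let ?f = "\<lambda>u z. std_normal_density z * g ((a0 + u * a1) + (b0 + u * b1) * z)"
  have I: "\<And>u. integrable lborel (?f u)" using Phi_integrable[OF gm gb] by blast
  have pt: "?f ((1 - t) *\<^sub>R x + t *\<^sub>R y) z \<le> (1 - t) * ?f x z + t * ?f y z" for z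
  proof -
    have "g ((a0 + ((1 - t) *\<^sub>R x + t *\<^sub>R y) * a1) + (b0 + ((1 - t) *\<^sub>R x + t *\<^sub>R y) * b1) * z)
       = g ((1 - t) *\<^sub>R ((a0 + x * a1) + (b0 + x * b1) * z) + t *\<^sub>R ((a0 + y * a1) + (b0 + y * b1) * z))"
      by (simp add: algebra_simps)
    also have "\<dots> \<le> (1 - t) * g ((a0 + x * a1) + (b0 + x * b1) * z) + t * g ((a0 + y * a1) + (b0 + y * b1) * z)"
      using convex_onD[OF gc, of t] t by auto
    finally have "g ((a0 + ((1 - t) *\<^sub>R x + t *\<^sub>R y) * a1) + (b0 + ((1 - t) *\<^sub>R x + t *\<^sub>R y) * b1) * z)
      \<le> (1 - t) * g ((a0 + x * a1) + (b0 + x * b1) * z) + t * g ((a0 + y * a1) + (b0 + y * b1) * z)" .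
    then have "std_normal_density z * g ((a0 + ((1 - t) *\<^sub>R x + t *\<^sub>R y) * a1) + (b0 + ((1 - t) *\<^sub>R x + t *\<^sub>R y) * b1) * z)
      \<le> std_normal_density z * ((1 - t) * g ((a0 + x * a1) + (b0 + x * b1) * z) + t * g ((a0 + y * a1) + (b0 + y * b1) * z))"
      by (rule mult_left_mono) simp
    then show ?thesis by (simp add: algebra_simps)
  qed
  have "Phi g (a0 + ((1 - t) *\<^sub>R x + t *\<^sub>R y) * a1) (b0 + ((1 - t) *\<^sub>R x + t *\<^sub>R y) * b1)
      = (\<integral>z. ?f ((1 - t) *\<^sub>R x + t *\<^sub>R y) z \<partial>lborel)" by (simp add: Phi_def)
  also have "\<dots> \<le> (\<integral>z. (1 - t) * ?f x z + t * ?f y z \<partial>lborel)"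
    using I pt by (intro integral_mono) auto
  also have "\<dots> = (1 - t) * (\<integral>z. ?f x z \<partial>lborel) + t * (\<integral>z. ?f y z \<partial>lborel)"
    using I by simp
  finally show "Phi g (a0 + ((1 - t) *\<^sub>R x + t *\<^sub>R y) * a1) (b0 + ((1 - t) *\<^sub>R x + t *\<^sub>R y) * b1)
      \<le> (1 - t) * Phi g (a0 + x * a1) (b0 + x * b1) + t * Phi g (a0 + y * a1) (b0 + y * b1)"
    unfolding Phi_def .
qed simp

lemma std_normal_density_uminus: "std_normal_density (- z) = std_normal_density z"
  unfolding std_normal_density_def by simp

lemma Phi_even: "Phi g a (- s) = Phi g a s"
proof -
  have "Phi g a s = \<bar>-1\<bar> *\<^sub>R (\<integral>z. std_normal_density (0 + -1 * z) * g (a + s * (0 + -1 * z)) \<partial>lborel)"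
    unfolding Phi_def by (rule lborel_integral_real_affine) simp
  also have "(\<lambda>z. std_normal_density (0 + -1 * z) * g (a + s * (0 + -1 * z))) = (\<lambda>z. std_normal_density z * g (a + (- s) * z))"
    by (simp add: std_normal_density_uminus)
  finally show ?thesis by (simp add: Phi_def)
qed

lemma Phi_mono:
  assumes gm: "g \<in> borel_measurable borel" and gb: "\<And>x. \<bar>g x\<bar> \<le> \<bar>x\<bar>"
    and gc: "convex_on UNIV g" and xy: "0 \<le> x" "x \<le> y"
  shows "Phi g a x \<le> Phi g a y"
proof (cases "y = 0")
  case True then show ?thesis using xy by simp
next
  case False
  then have y: "y > 0" using xy by simp
  define l where "l = (x + y) / (2 * y)"
  have l: "0 \<le> l" "l \<le> 1" using xy y by (auto simp: l_def field_simps)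
  have c: "convex_on UNIV (\<lambda>u. Phi g (a + u * 0) (0 + u * 1))"
    by (rule Phi_convex[OF gm gb gc])
  have xe: "(1 - l) *\<^sub>R (-y) + l *\<^sub>R y = x" using y by (simp add: l_def field_simps)
  have "Phi g (a + ((1 - l) *\<^sub>R (-y) + l *\<^sub>R y) * 0) (0 + ((1 - l) *\<^sub>R (-y) + l *\<^sub>R y) * 1)
     \<le> (1 - l) * Phi g (a + (-y) * 0) (0 + (-y) * 1) + l * Phi g (a + y * 0) (0 + y * 1)"
    by (rule convex_onD[OF c l]) auto
  then have "Phi g a x \<le> (1 - l) * Phi g a (-y) + l * Phi g a y"
    unfolding xe by simp
  also have "\<dots> = Phi g a y" unfolding Phi_even by (simp add: algebra_simps)
  finally show ?thesis .
qed

lemma dprob: assumes "\<forall>t\<in>{1..T}. sig t > 0" shows "prob_space (demand_space T mu sig)"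
  unfolding demand_space_def using assms by (intro prob_space_PiM) (auto intro: prob_space_normal_density)

lemma ddistr: assumes pos: "\<forall>t\<in>{1..T}. sig t > 0" and k: "k \<in> {1..T}"
  shows "distributed (demand_space T mu sig) lborel (\<lambda>X. X k) (normal_density (mu k) (sig k))"
proof -
  let ?M = "\<lambda>t. density lborel (normal_density (mu t) (sig t))"
  have "distr (demand_space T mu sig) lborel (\<lambda>X. X k) = distr (PiM {1..T} ?M) (?M k) (\<lambda>X. X k)"
    unfolding demand_space_def by (rule distr_cong) auto
  also have "\<dots> = ?M k"
    using pos k by (intro distr_PiM_component) (auto intro: prob_space_normal_density)
  finally have 1: "distr (demand_space T mu sig) lborel (\<lambda>X. X k) = ?M k" .
  have 2: "(\<lambda>X. X k) \<in> measurable (demand_space T mu sig) lborel"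
  proof -
    have "(\<lambda>X. X k) \<in> measurable (PiM {1..T} ?M) (?M k)"
      using k by (rule measurable_component_singleton)
    moreover have "measurable (PiM {1..T} ?M) (?M k) = measurable (demand_space T mu sig) lborel"
      unfolding demand_space_def by (rule measurable_cong_sets) auto
    ultimately show ?thesis by blast
  qed
  show ?thesis unfolding distributed_def using 1 2 by simp
qed

lemma dindep: assumes pos: "\<forall>t\<in>{1..T}. sig t > 0" and T: "1 \<le> T"
  shows "prob_space.indep_vars (demand_space T mu sig) (\<lambda>_. borel) (\<lambda>k X. X k) {1..T}"
proof -
  let ?M = "\<lambda>t. density lborel (normal_density (mu t) (sig t))"
  let ?D = "demand_space T mu sig"
  interpret prob_space ?D using dprob[OF pos] .
  have rv: "random_variable borel (\<lambda>X. X i)" if "i \<in> {1..T}" for i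
  proof -
    have "(\<lambda>X. X i) \<in> measurable ?D lborel"
      using ddistr[OF pos that, of mu] unfolding distributed_def by blast
    moreover have "measurable ?D lborel = measurable ?D borel"
      by (rule measurable_cong_sets) auto
    ultimately show ?thesis by blast
  qed
  show ?thesis
  proof (subst indep_vars_iff_distr_eq_PiM')
    show "{1..T} \<noteq> {}" using T by simp
    show "\<And>i. i \<in> {1..T} \<Longrightarrow> random_variable borel (\<lambda>X. X i)" by (rule rv)
    have "distr ?D (PiM {1..T} (\<lambda>_. borel)) (\<lambda>x. \<lambda>i\<in>{1..T}. x i) = distr ?D ?D (\<lambda>x. x)"
    proof (rule distr_cong)
      show "sets (PiM {1..T} (\<lambda>_. borel)) = sets ?D"
        unfolding demand_space_def by (intro sets_PiM_cong) auto
      fix x assume "x \<in> space ?D"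
      then show "(\<lambda>i\<in>{1..T}. x i) = x"
        unfolding demand_space_def space_PiM PiE_def extensional_def restrict_def by (intro ext) auto
    qed simp
    also have "\<dots> = ?D" by (rule distr_id2) simp
    also have "\<dots> = PiM {1..T} (\<lambda>i. distr ?D borel (\<lambda>x. x i))"
      unfolding demand_space_def
    proof (rule PiM_cong)
      fix i assume i: "i \<in> {1..T}"
      have "distr (PiM {1..T} ?M) borel (\<lambda>x. x i) = distr (PiM {1..T} ?M) (?M i) (\<lambda>x. x i)"
        by (rule distr_cong) auto
      also have "\<dots> = ?M i"
        using pos i by (intro distr_PiM_component) (auto intro: prob_space_normal_density)
      finally show "?M i = distr (PiM {1..T} ?M) borel (\<lambda>x. x i)" by simp
    qed simp
    finally show "distr ?D (PiM {1..T} (\<lambda>_. borel)) (\<lambda>x. \<lambda>i\<in>{1..T}. x i) = PiM {1..T} (\<lambda>i. distr ?D borel (\<lambda>x. x i))" .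
  qed
qed

lemma dsum: assumes pos: "\<forall>t\<in>{1..T}. sig t > 0" and j: "j \<in> {1..T}"
  shows "distributed (demand_space T mu sig) lborel (\<lambda>X. \<Sum>k=1..j. X k)
           (normal_density (\<Sum>k=1..j. mu k) (sqrt (\<Sum>k=1..j. (sig k)\<^sup>2)))"
proof -
  interpret prob_space "demand_space T mu sig" using dprob[OF pos] .
  have ind: "indep_vars (\<lambda>_. borel) (\<lambda>k X. X k) {1..j}"
  proof (rule indep_vars_subset)
    show "indep_vars (\<lambda>_. borel) (\<lambda>k X. X k) {1..T}" using dindep[OF pos, of mu] j by simp
    show "{1..j} \<subseteq> {1..T}" using j by simp
  qed
  show ?thesis
  proof (rule sum_indep_normal[OF _ _ ind])
    show "\<And>i. i \<in> {1..j} \<Longrightarrow> 0 < sig i" using j pos by auto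
    show "\<And>i. i \<in> {1..j} \<Longrightarrow> distributed (demand_space T mu sig) lborel (\<lambda>X. X i) (normal_density (mu i) (sig i))"
      using j by (intro ddistr[OF pos]) auto
  qed (use j in auto)
qed

lemma dexp: assumes pos: "\<forall>t\<in>{1..T}. sig t > 0" and j: "j \<in> {1..T}"
  shows "(\<integral>X. X j \<partial>demand_space T mu sig) = mu j"
proof -
  interpret prob_space "demand_space T mu sig" using dprob[OF pos] .
  show ?thesis using pos j by (intro normal_distributed_expectation[OF _ ddistr[OF pos j]]) auto
qed


lemma nd_affine:
  assumes S: "0 < S"
  shows "S * normal_density M S (M + S * z) = std_normal_density z"
proof -
  have sq: "sqrt (2 * pi * S\<^sup>2) = sqrt (2 * pi) * S"
    using S by (simp add: real_sqrt_mult)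
  have ex: "(M + S * z - M)\<^sup>2 / (2 * S\<^sup>2) = z\<^sup>2 / 2"
    using S by (simp add: power_mult_distrib field_simps)
  show ?thesis
    unfolding normal_density_def sq ex using S by (simp add: field_simps)
qed

lemma transfer:
  assumes S: "0 < S"
  shows "(\<integral>y. normal_density M S y * g (Q - y) \<partial>lborel) = Phi g (Q - M) (- S)"
proof -
  have "(\<integral>y. normal_density M S y * g (Q - y) \<partial>lborel)
      = \<bar>S\<bar> *\<^sub>R (\<integral>z. normal_density M S (M + S * z) * g (Q - (M + S * z)) \<partial>lborel)"
    using S by (intro lborel_integral_real_affine) simp
  also have "\<dots> = (\<integral>z. S * (normal_density M S (M + S * z) * g (Q - (M + S * z))) \<partial>lborel)"
    using S by simp
  also have "\<dots> = (\<integral>z. std_normal_density z * g ((Q - M) + (- S) * z) \<partial>lborel)"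
  proof (rule Bochner_Integration.integral_cong[OF refl])
    fix z
    have "S * (normal_density M S (M + S * z) * g (Q - (M + S * z)))
        = (S * normal_density M S (M + S * z)) * g (Q - (M + S * z))" by (simp only: mult.assoc)
    also have "\<dots> = std_normal_density z * g ((Q - M) + (- S) * z)"
      unfolding nd_affine[OF S] by (simp add: algebra_simps)
    finally show "S * (normal_density M S (M + S * z) * g (Q - (M + S * z))) = std_normal_density z * g ((Q - M) + (- S) * z)" .
  qed
  finally show ?thesis unfolding Phi_def .
qed

definition QQ :: "(nat \<Rightarrow> real) \<Rightarrow> nat \<Rightarrow> real" where "QQ f j = (\<Sum>k=1..j. f k)"
definition SS :: "(nat \<Rightarrow> real) \<Rightarrow> nat \<Rightarrow> real" where "SS f j = sqrt (\<Sum>k=1..j. (f k)\<^sup>2)"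

lemma dint:
  assumes pos: "\<forall>t\<in>{1..T}. sig t > 0" and j: "j \<in> {1..T}" and gm: "g \<in> borel_measurable borel"
  shows "(\<integral>X. g (inv_level q j X) \<partial>demand_space T mu sig) = Phi g (QQ q j - QQ mu j) (- SS sig j)"
proof -
  have Spos: "0 < SS sig j"
  proof -
    have "0 < (sig i)\<^sup>2" if "i \<in> {1..j}" for i
    proof -
      have "i \<in> {1..T}" using that j by auto
      then have "0 < sig i" using pos by blast
      then show ?thesis by simp
    qed
    then show ?thesis unfolding SS_def using j by (intro real_sqrt_gt_zero sum_pos) auto
  qed
  have inv: "inv_level q j X = QQ q j - (\<Sum>k=1..j. X k)" for X
    by (simp add: inv_level_def QQ_def sum_subtractf)
  have "(\<integral>X. g (inv_level q j X) \<partial>demand_space T mu sig) = (\<integral>X. (\<lambda>y. g (QQ q j - y)) (\<Sum>k=1..j. X k) \<partial>demand_space T mu sig)"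
    by (simp add: inv)
  also have "\<dots> = (\<integral>y. normal_density (QQ mu j) (SS sig j) y * g (QQ q j - y) \<partial>lborel)"
    unfolding QQ_def SS_def
    by (rule distributed_integral[OF dsum[OF pos j], symmetric]) (use gm in auto)
  also have "\<dots> = Phi g (QQ q j - QQ mu j) (- SS sig j)"
    by (rule transfer[OF Spos])
  finally show ?thesis .
qed

lemma cost_eq:
  assumes pos: "\<forall>t\<in>{1..T}. sig t > 0" and T: "1 \<le> T"
  shows "exp_cost T h b p w mu sig q =
    p * Phi neg_part (QQ q T - QQ mu T) (- SS sig T)
    + (\<Sum>j=1..T. h * Phi pos_part (QQ q j - QQ mu j) (- SS sig j)
                + b * Phi neg_part (QQ q j - QQ mu j) (- SS sig j)
                + (w j * q j - p * mu j))"
proof -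
  have mp: "pos_part \<in> borel_measurable borel" unfolding pos_part_def by measurable
  have mn: "neg_part \<in> borel_measurable borel" unfolding neg_part_def by measurable
  show ?thesis
    unfolding exp_cost_def Let_def
    using T dint[OF pos _ mp] dint[OF pos _ mn] dexp[OF pos]
    by (intro arg_cong2[where f="(+)"] sum.cong) auto
qed


lemma pos_part_props:
  "pos_part \<in> borel_measurable borel" "\<And>x. \<bar>pos_part x\<bar> \<le> \<bar>x\<bar>" "convex_on UNIV pos_part"
proof -
  show "pos_part \<in> borel_measurable borel" unfolding pos_part_def by measurable
  show "\<And>x. \<bar>pos_part x\<bar> \<le> \<bar>x\<bar>" unfolding pos_part_def by auto
  show "convex_on UNIV pos_part"
  proof (rule convex_onI)
    fix t x y :: real assume t: "0 < t" "t < 1"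
    have 1: "(1 - t) * x \<le> (1 - t) * max x 0" using t by (intro mult_left_mono) auto
    have 2: "t * y \<le> t * max y 0" using t by (intro mult_left_mono) auto
    have 3: "0 \<le> (1 - t) * max x 0" "0 \<le> t * max y 0" using t by auto
    show "pos_part ((1 - t) *\<^sub>R x + t *\<^sub>R y) \<le> (1 - t) * pos_part x + t * pos_part y"
      unfolding pos_part_def using 1 2 3 by simp
  qed simp
qed

lemma neg_part_props:
  "neg_part \<in> borel_measurable borel" "\<And>x. \<bar>neg_part x\<bar> \<le> \<bar>x\<bar>" "convex_on UNIV neg_part"
proof -
  show "neg_part \<in> borel_measurable borel" unfolding neg_part_def by measurable
  show "\<And>x. \<bar>neg_part x\<bar> \<le> \<bar>x\<bar>" unfolding neg_part_def by auto
  show "convex_on UNIV neg_part"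
  proof (rule convex_onI)
    fix t x y :: real assume t: "0 < t" "t < 1"
    have 1: "(1 - t) * (- x) \<le> (1 - t) * max (- x) 0" using t by (intro mult_left_mono) auto
    have 2: "t * (- y) \<le> t * max (- y) 0" using t by (intro mult_left_mono) auto
    have 3: "0 \<le> (1 - t) * max (- x) 0" "0 \<le> t * max (- y) 0" using t by auto
    show "neg_part ((1 - t) *\<^sub>R x + t *\<^sub>R y) \<le> (1 - t) * neg_part x + t * neg_part y"
    proof -
      have "- ((1 - t) * x + t * y) \<le> (1 - t) * max (- x) 0 + t * max (- y) 0"
        using 1 2 by (simp add: algebra_simps)
      moreover have "0 \<le> (1 - t) * max (- x) 0 + t * max (- y) 0" using 3 by simp
      ultimately show ?thesis unfolding neg_part_def by simp
    qed
  qed simp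
qed

lemma convex_on_sumf:
  assumes "finite J" "\<And>j. j \<in> J \<Longrightarrow> convex_on UNIV (f j)"
  shows "convex_on UNIV (\<lambda>x. \<Sum>j\<in>J. f j x)"
  using assms
proof (induction J rule: finite_induct)
  case empty then show ?case by (simp add: convex_on_const)
next
  case (insert a J) then show ?case by (simp add: convex_on_add)
qed

lemma convex_lin: "convex_on UNIV (\<lambda>m::real. a * m + c)"
  by (rule convex_onI) (auto simp: algebra_simps)

lemma QQ_upd:
  assumes t: "1 \<le> t"
  shows "QQ (f(t := m)) j = QQ f j + (if t \<le> j then m - f t else 0)"
proof (cases "t \<le> j")
  case True
  then have tin: "t \<in> {1..j}" using t by auto
  have a: "QQ (f(t := m)) j = m + (\<Sum>k\<in>{1..j} - {t}. f k)"
  proof -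
    have "QQ (f(t := m)) j = (f(t := m)) t + (\<Sum>k\<in>{1..j} - {t}. (f(t := m)) k)"
      unfolding QQ_def by (rule sum.remove[OF _ tin]) simp
    also have "(\<Sum>k\<in>{1..j} - {t}. (f(t := m)) k) = (\<Sum>k\<in>{1..j} - {t}. f k)"
      by (rule sum.cong) auto
    finally show ?thesis by (simp only: fun_upd_same)
  qed
  have b: "QQ f j = f t + (\<Sum>k\<in>{1..j} - {t}. f k)"
    unfolding QQ_def by (rule sum.remove[OF _ tin]) simp
  have c: "(if t \<le> j then m - f t else 0) = m - f t" using True by simp
  show ?thesis unfolding c a b by simp
next
  case False
  then have "QQ (f(t := m)) j = QQ f j" unfolding QQ_def by (intro sum.cong) auto
  then show ?thesis using False by simp
qed

lemma Phi_term_convex: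
  assumes gm: "g \<in> borel_measurable borel" and gb: "\<And>x. \<bar>g x\<bar> \<le> \<bar>x\<bar>"
    and gc: "convex_on UNIV g" and t: "1 \<le> t"
  shows "convex_on UNIV (\<lambda>m. Phi g (QQ q j - QQ (mu(t := m)) j) c)"
proof -
  define A where "A = QQ q j - QQ mu j + (if t \<le> j then mu t else 0)"
  define B :: real where "B = (if t \<le> j then -1 else 0)"
  have eq: "(\<lambda>m. Phi g (QQ q j - QQ (mu(t := m)) j) c) = (\<lambda>m. Phi g (A + m * B) c)"
    by (rule ext) (simp add: QQ_upd[OF t] A_def B_def algebra_simps)
  have cv: "convex_on UNIV (\<lambda>u. Phi g (A + u * B) c)"
    using Phi_convex[OF gm gb gc, of A B c 0] by (simp only: mult_zero_right add_0_right)
  show ?thesis unfolding eq by (rule cv)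
qed

lemma SS_mono:
  assumes "0 < x" "x \<le> y"
  shows "SS (sig(t := x)) j \<le> SS (sig(t := y)) j"
  unfolding SS_def
proof (rule real_sqrt_le_mono, rule sum_mono)
  fix k show "((sig(t := x)) k)\<^sup>2 \<le> ((sig(t := y)) k)\<^sup>2"
    using assms by (cases "k = t") (auto intro: power_mono)
qed

lemma SS_nonneg: "0 \<le> SS f j" unfolding SS_def by (intro real_sqrt_ge_zero sum_nonneg) simp

lemma Phi_term_mono:
  assumes gm: "g \<in> borel_measurable borel" and gb: "\<And>x. \<bar>g x\<bar> \<le> \<bar>x\<bar>"
    and gc: "convex_on UNIV g" and xy: "0 < x" "x \<le> y"
  shows "Phi g a (- SS (sig(t := x)) j) \<le> Phi g a (- SS (sig(t := y)) j)"
  unfolding Phi_even using Phi_mono[OF gm gb gc SS_nonneg SS_mono[OF xy]] .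

theorem theorem4p3:
  fixes T :: nat and h b p :: real and w q mu sig :: "nat \<Rightarrow> real"
  assumes "h \<ge> 0" and "b \<ge> 0" and "p \<ge> 0"
    and "\<forall>t\<in>{1..T}. w t \<ge> 0"
    and "\<forall>t\<in>{1..T}. sig t > 0"
  shows "(\<forall>t\<in>{1..T}. convex_on UNIV (\<lambda>m. exp_cost T h b p w (mu(t := m)) sig q))
       \<and> (\<forall>t\<in>{1..T}. mono_on {0<..} (\<lambda>s. exp_cost T h b p w mu (sig(t := s)) q))"
proof (intro conjI ballI)
  note P = pos_part_props and N = neg_part_props
  have hp: "0 \<le> h" "0 \<le> b" "0 \<le> p" using assms by auto
  have pos: "\<forall>t\<in>{1..T}. sig t > 0" using assms by auto
  fix t assume t: "t \<in> {1..T}"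
  then have T: "1 \<le> T" and t1: "1 \<le> t" by auto
  {
    have eq: "(\<lambda>m. exp_cost T h b p w (mu(t := m)) sig q) = (\<lambda>m.
      p * Phi neg_part (QQ q T - QQ (mu(t := m)) T) (- SS sig T)
      + (\<Sum>j=1..T. h * Phi pos_part (QQ q j - QQ (mu(t := m)) j) (- SS sig j)
                + b * Phi neg_part (QQ q j - QQ (mu(t := m)) j) (- SS sig j)
                + (w j * q j - p * (mu(t := m)) j)))"
      by (rule ext) (rule cost_eq[OF pos T])
    have lin: "convex_on UNIV (\<lambda>m. w j * q j - p * (mu(t := m)) j)" for j
    proof -
      have "(\<lambda>m. w j * q j - p * (mu(t := m)) j) = (\<lambda>m. (if j = t then - p else 0) * m + (w j * q j - (if j = t then 0 else p * mu j)))"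
        by (rule ext) auto
      then show ?thesis using convex_lin by simp
    qed
    show "convex_on UNIV (\<lambda>m. exp_cost T h b p w (mu(t := m)) sig q)"
      unfolding eq
      by (intro convex_on_add convex_on_cmul hp Phi_term_convex[OF N t1] Phi_term_convex[OF P t1]
          convex_on_sumf lin) auto
  }
  {
    show "mono_on {0<..} (\<lambda>s. exp_cost T h b p w mu (sig(t := s)) q)"
    proof (rule mono_onI)
      fix x y :: real assume x: "x \<in> {0<..}" and y: "y \<in> {0<..}" and xy: "x \<le> y"
      have px: "\<forall>k\<in>{1..T}. (sig(t := x)) k > 0" using pos x by auto
      have py: "\<forall>k\<in>{1..T}. (sig(t := y)) k > 0" using pos y by auto
      have x0: "0 < x" using x by simp
      show "exp_cost T h b p w mu (sig(t := x)) q \<le> exp_cost T h b p w mu (sig(t := y)) q"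
        unfolding cost_eq[OF px T] cost_eq[OF py T]
        by (intro add_mono mult_left_mono hp sum_mono order_refl
            Phi_term_mono[OF P x0 xy] Phi_term_mono[OF N x0 xy])
    qed
  }
qed

end
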